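(* Let $F_t>0$, $\sigma_t>0$, $h>0$, $\nu>0$, $-1<\rho<1$, $\rho_\ast=\sqrt{1-\rho^2}$. Let $Z$ be a standard Brownian motion, $\sigma_{t+h}=\sigma_t\exp(\nu Z_h-\nu^2h/2)$, and let $I>0$ be any random variable (jointly distributed with $\sigma_{t+h}$). Put $V=\rho_\ast^2\sigma_t^2hI$ and $a=F_t+\frac{\rho}{\nu}(\sigma_{t+h}-\sigma_t)$. Suppose $F_{t+h}\ge0$ is a random variable whose conditional law given $(\sigma_{t+h},I)$ satisfies, for all $y>0$, $$\mathrm{Prob}(F_{t+h}\ge y\mid\sigma_{t+h},I)=P_{\chi^2}\!\left(\frac{a^2}{V};\,1,\,\frac{y^2}{V}\right).$$ Then $E[F_{t+h}\mid\sigma_{t+h},I]=|a|$, and consequently $E[F_{t+h}]\ge F_t$.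
   Context: $P_{\chi^2}(x;\delta,r)=\int_0^x f_{\chi^2}(u;\delta,r)\,\mathrm{d}u$ is the distribution function of the noncentral chi-squared law with $\delta$ degrees of freedom and noncentrality $r$, evaluated at $x$, where $f_{\chi^2}(x;\delta,r)=\frac12(x/r)^{\alpha/2}I_\alpha(\sqrt{xr})e^{-(x+r)/2}$ with $\alpha=\delta/2-1$ and $I_\alpha$ the modified Bessel function of the first kind. The displayed conditional law is Islah's approximation of the SABR conditional forward price specialized to $\beta=0$. *)

theory Defs
  imports "HOL-Probability.Probability"
begin

definition bessel_I :: "real \<Rightarrow> real \<Rightarrow> real" where
  "bessel_I \<alpha> z = (\<Sum>k. (z / 2) powr (2 * real k + \<alpha>) / (fact k * Gamma (real k + \<alpha> + 1)))"

text \<open>Density of the noncentral chi-squared law with delta degrees of freedom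
  and noncentrality r, as in the paper (alpha = delta/2 - 1).\<close>
definition chi2_density :: "real \<Rightarrow> real \<Rightarrow> real \<Rightarrow> real" where
  "chi2_density x \<delta> r =
     (let \<alpha> = \<delta> / 2 - 1 in
      1/2 * (x / r) powr (\<alpha> / 2) * bessel_I \<alpha> (sqrt (x * r)) * exp (- (x + r) / 2))"

definition P_chi2 :: "real \<Rightarrow> real \<Rightarrow> real \<Rightarrow> real" where
  "P_chi2 x \<delta> r = (LBINT u=0..x. chi2_density u \<delta> r)"

end

theory Submission
  imports Defs
begin


lemma Gamma_half_nat: "Gamma (real k + 1/2) = sqrt pi * fact (2*k) / (4^k * fact k)"
proof (induction k)
  case 0 then show ?case by (simp add: Gamma_one_half_real)
next
  case (Suc k)
  have "Gamma (real (Suc k) + 1/2) = Gamma ((real k + 1/2) + 1)" by (simp add: algebra_simps)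
  also have "\<dots> = (real k + 1/2) * Gamma (real k + 1/2)"
    by (rule Gamma_plus1) (auto simp: nonpos_Ints_def, linarith?)
  also have "\<dots> = (real k + 1/2) * (sqrt pi * fact (2*k) / (4^k * fact k))" by (simp add: Suc)
  also have "\<dots> = sqrt pi * fact (2*Suc k) / (4^Suc k * fact (Suc k))"
  proof -
    have f2: "fact (2*Suc k) = (2*real k+2)*(2*real k+1)*(fact (2*k)::real)"
      by (simp add: fact_Suc algebra_simps)
    have f1: "fact (Suc k) = (real k + 1) * (fact k::real)" by (simp add: fact_Suc)
    have p: "(4::real)^Suc k = 4 * 4^k" by simp
    have nz: "(4::real)^k * fact k > 0" by simp
    show ?thesis unfolding f2 f1 p using nz
      by (simp add: divide_simps) (simp add: algebra_simps)
  qed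
  finally show ?case .
qed

lemma cosh_even_sums: "(\<lambda>k. (z::real)^(2*k) / fact (2*k)) sums cosh z"
proof -
  have "(\<lambda>k. (\<lambda>n. if even n then z ^ n /\<^sub>R fact n else 0) (2*k)) sums cosh z"
    by (subst sums_mono_reindex) (auto simp: strict_mono_def cosh_converges elim!: evenE)
  then show ?thesis by (simp add: divide_inverse mult.commute)
qed

lemma bessel_half:
  assumes z: "z > 0"
  shows "bessel_I (-1/2) z = sqrt (2 / (pi * z)) * cosh z"
proof -
  have tm: "(z / 2) powr (2 * real k + -1/2) / (fact k * Gamma (real k + -1/2 + 1))
      = ((z/2) powr (-1/2) / sqrt pi) * (z^(2*k) / fact (2*k))" for k
  proof -
    have "(z / 2) powr (2 * real k + -1/2) = (z/2) powr (2 * real k) * (z/2) powr (-1/2)"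
      by (rule powr_add)
    also have "(z/2) powr (2 * real k) = (z/2)^(2*k)"
      using z powr_realpow[of "z/2" "2*k"] by simp
    finally have "(z / 2) powr (2 * real k + -1/2) = (z/2) powr (-1/2) * (z/2)^(2*k)" by simp
    moreover have G: "Gamma (real k + -1/2 + 1) = sqrt pi * fact (2*k) / (4^k * fact k)"
      using Gamma_half_nat[of k] by (simp add: algebra_simps)
    moreover have "(z/2)^(2*k) = z^(2*k) / 4^k"
      by (simp add: power_divide power_mult)
    ultimately have "(z / 2) powr (2 * real k + -1/2) / (fact k * Gamma (real k + -1/2 + 1))
       = (z/2) powr (-1/2) * (z^(2*k) / 4^k) / (fact k * (sqrt pi * fact (2*k) / (4^k * fact k)))"
      by simp
    also have "\<dots> = ((z/2) powr (-1/2) / sqrt pi) * (z^(2*k) / fact (2*k))"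
    proof -
      have "sqrt pi > 0" "(fact k::real) > 0" "(fact (2*k)::real) > 0" "(4::real)^k > 0" by auto
      then show ?thesis by (simp add: field_simps)
    qed
    finally show ?thesis .
  qed
  have "(\<lambda>k. (z / 2) powr (2 * real k + -1/2) / (fact k * Gamma (real k + -1/2 + 1)))
        sums (((z/2) powr (-1/2) / sqrt pi) * cosh z)"
    unfolding tm by (intro sums_mult cosh_even_sums)
  then have "bessel_I (-1/2) z = ((z/2) powr (-1/2) / sqrt pi) * cosh z"
    unfolding bessel_I_def by (rule sums_unique[symmetric])
  also have "(z/2) powr (-1/2) / sqrt pi = sqrt (2 / (pi * z))"
  proof -
    have "(z/2) powr (-1/2) = 1 / sqrt (z/2)"
      using z by (simp add: powr_minus_divide powr_half_sqrt)
    then show ?thesis using z by (simp add: real_sqrt_divide real_sqrt_mult field_simps)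
  qed
  finally show ?thesis .
qed

definition gg :: "real \<Rightarrow> real \<Rightarrow> real" where
  "gg u r = exp (-(u + r)/2) * cosh (sqrt (u*r)) / sqrt (2*pi*u)"

lemma chi2_density_1:
  assumes u: "u > 0" and r: "r > 0"
  shows "chi2_density u 1 r = gg u r"
proof -
  have a: "(1::real)/2 - 1 = -1/2" by simp
  have "chi2_density u 1 r = 1/2 * (u / r) powr (-1/4) * bessel_I (-1/2) (sqrt (u * r)) * exp (- (u + r) / 2)"
    unfolding chi2_density_def Let_def a by simp
  also have "\<dots> = 1/2 * (u / r) powr (-1/4) * sqrt (2 / (pi * sqrt (u * r))) * cosh (sqrt (u*r)) * exp (- (u + r) / 2)"
    using u r bessel_half[of "sqrt (u*r)"] by simp
  also have "1/2 * (u / r) powr (-1/4) * sqrt (2 / (pi * sqrt (u * r))) = 1 / sqrt (2*pi*u)"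
  proof -
    define x where "x = (u / r) powr (-1/4)"
    have xpos: "x > 0" unfolding x_def using u r by simp
    have x2: "x^2 = 1 / sqrt (u/r)"
    proof -
      have "x^2 = x * x" by (simp add: power2_eq_square)
      also have "\<dots> = (u/r) powr (-1/4 + -1/4)" unfolding x_def by (rule powr_add[symmetric])
      also have "\<dots> = (u/r) powr (-(1/2))" by simp
      also have "\<dots> = 1 / sqrt (u/r)" using u r by (simp add: powr_minus_divide powr_half_sqrt)
      finally show ?thesis .
    qed
    have L: "1/2 * x * sqrt (2 / (pi * sqrt (u * r))) > 0" using xpos u r by simp
    have R: "1 / sqrt (2*pi*u) > 0" using u by simp
    have "(1/2 * x * sqrt (2 / (pi * sqrt (u * r))))^2 = 1/4 * x^2 * (2 / (pi * sqrt (u * r)))"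
      using u r by (simp add: power_mult_distrib power_divide)
    also have "\<dots> = (1 / sqrt (2*pi*u))^2"
      unfolding x2 using u r by (simp add: real_sqrt_divide real_sqrt_mult field_simps)
    finally have "(1/2 * x * sqrt (2 / (pi * sqrt (u * r))))^2 = (1 / sqrt (2*pi*u))^2" .
    then show ?thesis using L R unfolding x_def[symmetric]
      by (metis less_eq_real_def power2_eq_imp_eq)
  qed
  finally show ?thesis unfolding gg_def by (simp add: field_simps)
qed



lemma nn_normal_1: assumes sg: "\<sigma> > 0" shows " (\<integral>\<^sup>+ y. ennreal (normal_density \<mu> \<sigma> y) \<partial>lborel) = 1"
proof -
  interpret prob_space "density lborel (\<lambda>x. ennreal (normal_density \<mu> \<sigma> x))"
    by (rule prob_space_normal_density) (rule sg)
  have "emeasure (density lborel (\<lambda>x. ennreal (normal_density \<mu> \<sigma> x))) UNIV = 1"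
    using emeasure_space_1 by simp
  then show ?thesis by (simp add: emeasure_density)
qed

lemma gg_normal:
  assumes u: "u > 0" and V: "V > 0"
  shows "gg u (y^2/V) = sqrt V / (2 * sqrt u) *
     (normal_density (sqrt (u*V)) (sqrt V) y + normal_density (- sqrt (u*V)) (sqrt V) y)"
proof -
  define s where "s = sqrt (u / V)"
  have s0: "s > 0" using u V unfolding s_def by simp
  have ss: "s^2 = u / V" using u V unfolding s_def by simp
  have sq: "sqrt (u * (y^2/V)) = abs y * s" unfolding s_def
    using u V by (simp add: real_sqrt_mult real_sqrt_divide)
  have ch: "cosh (abs y * s) = (exp (y * s) + exp (-(y * s))) / 2"
    by (cases "y \<ge> 0") (simp_all add: cosh_def)
  have m: "sqrt (u*V) = s * V" unfolding s_def using u V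
    by (simp add: real_sqrt_mult real_sqrt_divide field_simps)
  have e1: "exp (-(y - s * V)\<^sup>2 / (2 * V)) = exp (-(u + y^2/V)/2) * exp (y * s)"
  proof -
    have "-(y - s * V)\<^sup>2 / (2 * V) = -(u + y^2/V)/2 + y * s"
      using V ss by (simp add: power2_eq_square field_simps)
    then show ?thesis by (simp add: exp_add)
  qed
  have e2: "exp (-(y - - (s * V))\<^sup>2 / (2 * V)) = exp (-(u + y^2/V)/2) * exp (-(y * s))"
  proof -
    have "-(y - - (s * V))\<^sup>2 / (2 * V) = -(u + y^2/V)/2 + -(y * s)"
      using V ss by (simp add: power2_eq_square field_simps)
    then show ?thesis by (simp add: exp_add[symmetric])
  qed
  have sv: "sqrt V ^ 2 = V" using V by simp
  have k: "sqrt V / (2 * sqrt u) * (1 / sqrt (2 * pi * V)) = 1 / (2 * sqrt (2*pi*u))"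
    using u V by (simp add: real_sqrt_mult field_simps)
  define A where "A = exp (-(u + y^2/V)/2) * exp (y * s)"
  define B where "B = exp (-(u + y^2/V)/2) * exp (-(y * s))"
  have "sqrt V / (2 * sqrt u) *
     (normal_density (sqrt (u*V)) (sqrt V) y + normal_density (- sqrt (u*V)) (sqrt V) y)
     = sqrt V / (2 * sqrt u) * (1 / sqrt (2 * pi * V)) * (A + B)"
    unfolding normal_density_def m sv e1 e2 A_def B_def by (simp add: algebra_simps)
  also have "\<dots> = 1 / (2 * sqrt (2*pi*u)) * (A + B)" unfolding k ..
  also have "\<dots> = gg u (y^2/V)"
    unfolding gg_def sq ch A_def B_def by (simp add: field_simps)
  finally show ?thesis ..
qed



lemma half_normal_sum:
  assumes sg: "\<sigma> > 0"
  shows "(\<integral>\<^sup>+ y. indicator {0<..} y * ennreal (normal_density m \<sigma> y) \<partial>lborel)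
       + (\<integral>\<^sup>+ y. indicator {0<..} y * ennreal (normal_density (-m) \<sigma> y) \<partial>lborel) = 1"
proof -
  have "(\<integral>\<^sup>+ y. indicator {0<..} y * ennreal (normal_density (-m) \<sigma> y) \<partial>lborel)
      = ennreal \<bar>-1::real\<bar> * (\<integral>\<^sup>+ y. indicator {0<..} (0 + -1 * y) * ennreal (normal_density (-m) \<sigma> (0 + -1 * y)) \<partial>lborel)"
    by (rule nn_integral_real_affine) auto
  also have "\<dots> = (\<integral>\<^sup>+ y. indicator {..<0} y * ennreal (normal_density m \<sigma> y) \<partial>lborel)"
    by (simp, intro nn_integral_cong) (auto simp: normal_density_def indicator_def power2_commute)
  finally have r: "(\<integral>\<^sup>+ y. indicator {0<..} y * ennreal (normal_density (-m) \<sigma> y) \<partial>lborel)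
     = (\<integral>\<^sup>+ y. indicator {..<0} y * ennreal (normal_density m \<sigma> y) \<partial>lborel)" .
  have "(\<integral>\<^sup>+ y. indicator {0<..} y * ennreal (normal_density m \<sigma> y) \<partial>lborel)
       + (\<integral>\<^sup>+ y. indicator {..<0} y * ennreal (normal_density m \<sigma> y) \<partial>lborel)
     = (\<integral>\<^sup>+ y. indicator {0<..} y * ennreal (normal_density m \<sigma> y) 
          + indicator {..<0} y * ennreal (normal_density m \<sigma> y) \<partial>lborel)"
    by (rule nn_integral_add[symmetric]) auto
  also have "\<dots> = (\<integral>\<^sup>+ y. ennreal (normal_density m \<sigma> y) \<partial>lborel)"
    by (intro nn_integral_cong_AE, use AE_lborel_singleton[of 0] in eventually_elim)
       (auto simp: indicator_def)
  also have "\<dots> = 1" using nn_normal_1[OF sg] .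
  finally show ?thesis unfolding r .
qed

lemma gg_y_int:
  assumes u: "u > 0" and V: "V > 0"
  shows "(\<integral>\<^sup>+ y. indicator {0<..} y * ennreal (gg u (y^2/V)) \<partial>lborel) = ennreal (sqrt V / (2 * sqrt u))"
proof -
  define K where "K = sqrt V / (2 * sqrt u)"
  have K0: "K \<ge> 0" unfolding K_def using u V by simp
  have "(\<integral>\<^sup>+ y. indicator {0<..} y * ennreal (gg u (y^2/V)) \<partial>lborel)
     = (\<integral>\<^sup>+ y. ennreal K * (indicator {0<..} y * ennreal (normal_density (sqrt (u*V)) (sqrt V) y)
          + indicator {0<..} y * ennreal (normal_density (- sqrt (u*V)) (sqrt V) y)) \<partial>lborel)"
    unfolding gg_normal[OF u V] K_def[symmetric] using K0
    by (intro nn_integral_cong) (simp add: ennreal_mult ennreal_plus distrib_left algebra_simps)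
  also have "\<dots> = ennreal K * ((\<integral>\<^sup>+ y. indicator {0<..} y * ennreal (normal_density (sqrt (u*V)) (sqrt V) y) \<partial>lborel)
          + (\<integral>\<^sup>+ y. indicator {0<..} y * ennreal (normal_density (- sqrt (u*V)) (sqrt V) y) \<partial>lborel))"
    by (subst nn_integral_cmult) (auto simp: nn_integral_add)
  also have "\<dots> = ennreal K" using half_normal_sum[of "sqrt V" "sqrt (u*V)"] V by simp
  finally show ?thesis unfolding K_def .
qed



lemma measurable_gg[measurable (raw)]:
  assumes [measurable]: "f \<in> borel_measurable M" "g \<in> borel_measurable M"
  shows "(\<lambda>x. gg (f x) (g x)) \<in> borel_measurable M"
  unfolding gg_def cosh_field_def by measurable

lemma int_inv_sqrt:
  assumes c: "c \<ge> 0"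
  shows "(\<integral>\<^sup>+ u. indicator {0<..<c} u * ennreal (1 / sqrt u) \<partial>lborel) = ennreal (2 * sqrt c)"
proof -
  have h: "((\<lambda>x. x powr (-1/2)) has_integral (c powr (-1/2+1) / (-1/2+1))) {0..c}"
    by (rule has_integral_powr_from_0) (use c in auto)
  have "(\<integral>\<^sup>+ u. ennreal (u powr (-1/2)) * indicator {0..c} u \<partial>lborel) = ennreal (c powr (-1/2+1) / (-1/2+1))"
    by (rule nn_integral_has_integral_lebesgue'[OF _ h]) simp
  also have "c powr (-1/2+1) / (-1/2+1) = 2 * sqrt c"
    using c by (simp add: powr_half_sqrt)
  also have "(\<integral>\<^sup>+ u. ennreal (u powr (-1/2)) * indicator {0..c} u \<partial>lborel)
      = (\<integral>\<^sup>+ u. indicator {0<..<c} u * ennreal (1 / sqrt u) \<partial>lborel)"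
  proof (intro nn_integral_cong_AE)
    show "AE x in lborel. ennreal (x powr (-1/2)) * indicator {0..c} x = indicator {0<..<c} x * ennreal (1 / sqrt x)"
      using AE_lborel_singleton[of 0] AE_lborel_singleton[of c]
    proof eventually_elim
      case (elim x)
      then show ?case
        by (cases "0 < x \<and> x < c") (auto simp: indicator_def powr_minus_divide powr_half_sqrt)
    qed
  qed
  finally show ?thesis .
qed

lemma stepA:
  assumes c: "c \<ge> 0" and V: "V > 0"
  shows "(\<integral>\<^sup>+ y. indicator {0<..} y * (\<integral>\<^sup>+ u. indicator {0<..<c} u * ennreal (gg u (y^2/V)) \<partial>lborel) \<partial>lborel)
       = ennreal (sqrt (c * V))"
proof -
  have pf: "pair_sigma_finite lborel lborel"
    by (simp add: pair_sigma_finite_def lborel.sigma_finite_measure_axioms)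
  have "(\<integral>\<^sup>+ y. indicator {0<..} y * (\<integral>\<^sup>+ u. indicator {0<..<c} u * ennreal (gg u (y^2/V)) \<partial>lborel) \<partial>lborel)
     = (\<integral>\<^sup>+ y. (\<integral>\<^sup>+ u. indicator {0<..} y * (indicator {0<..<c} u * ennreal (gg u (y^2/V))) \<partial>lborel) \<partial>lborel)"
    by (intro nn_integral_cong, subst nn_integral_cmult) auto
  also have "\<dots> = (\<integral>\<^sup>+ u. (\<integral>\<^sup>+ y. indicator {0<..} y * (indicator {0<..<c} u * ennreal (gg u (y^2/V))) \<partial>lborel) \<partial>lborel)"
    by (rule pair_sigma_finite.Fubini'[OF pf]) measurable
  also have "\<dots> = (\<integral>\<^sup>+ u. indicator {0<..<c} u * (\<integral>\<^sup>+ y. indicator {0<..} y * ennreal (gg u (y^2/V)) \<partial>lborel) \<partial>lborel)"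
    by (intro nn_integral_cong, subst nn_integral_cmult[symmetric]) (auto simp: algebra_simps)
  also have "\<dots> = (\<integral>\<^sup>+ u. ennreal (sqrt V / 2) * (indicator {0<..<c} u * ennreal (1 / sqrt u)) \<partial>lborel)"
  proof (intro nn_integral_cong)
    fix u :: real
    show "indicator {0<..<c} u * (\<integral>\<^sup>+ y. indicator {0<..} y * ennreal (gg u (y^2/V)) \<partial>lborel)
        = ennreal (sqrt V / 2) * (indicator {0<..<c} u * ennreal (1 / sqrt u))"
    proof (cases "0 < u \<and> u < c")
      case True
      then have "sqrt V / (2 * sqrt u) = sqrt V / 2 * (1 / sqrt u)" by simp
      then show ?thesis using True V by (simp add: gg_y_int ennreal_mult[symmetric])
    qed (auto simp: indicator_def)
  qed
  also have "\<dots> = ennreal (sqrt V / 2) * ennreal (2 * sqrt c)"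
    by (subst nn_integral_cmult) (auto simp: int_inv_sqrt[OF c])
  also have "\<dots> = ennreal (sqrt (c * V))"
    using V c by (simp add: ennreal_mult[symmetric] real_sqrt_mult)
  finally show ?thesis .
qed



lemma gg_nonneg: "u \<ge> 0 \<Longrightarrow> gg u r \<ge> 0"
  unfolding gg_def by (simp add: divide_nonneg_nonneg)

lemma P_chi2_nn:
  assumes c: "c \<ge> 0" and r: "r > 0"
  shows "ennreal (P_chi2 c 1 r) = (\<integral>\<^sup>+ u. indicator {0<..<c} u * ennreal (gg u r) \<partial>lborel)"
proof -
  define K where "K = cosh (sqrt (c * r)) / sqrt (2 * pi)"
  have K0: "K \<ge> 0" unfolding K_def by simp
  have fin: "(\<integral>\<^sup>+ u. indicator {0<..<c} u * ennreal (gg u r) \<partial>lborel) < \<infinity>"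
  proof -
    have "(\<integral>\<^sup>+ u. indicator {0<..<c} u * ennreal (gg u r) \<partial>lborel)
        \<le> (\<integral>\<^sup>+ u. ennreal K * (indicator {0<..<c} u * ennreal (1 / sqrt u)) \<partial>lborel)"
    proof (intro nn_integral_mono)
      fix u :: real
      show "indicator {0<..<c} u * ennreal (gg u r) \<le> ennreal K * (indicator {0<..<c} u * ennreal (1 / sqrt u))"
      proof (cases "0 < u \<and> u < c")
        case True
        have e: "exp (-(u + r)/2) \<le> 1" using True r by simp
        have ch: "cosh (sqrt (u * r)) \<le> cosh (sqrt (c * r))"
          using True r by (subst cosh_real_nonneg_le_iff) auto
        have "gg u r = exp (-(u + r)/2) * cosh (sqrt (u*r)) / (sqrt (2*pi) * sqrt u)"
          unfolding gg_def by (simp add: real_sqrt_mult)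
        also have "\<dots> \<le> 1 * cosh (sqrt (c*r)) / (sqrt (2*pi) * sqrt u)"
          using True e ch by (intro divide_right_mono mult_mono) auto
        also have "\<dots> = K * (1 / sqrt u)" unfolding K_def by simp
        finally show ?thesis using True K0 by (simp add: ennreal_mult[symmetric] ennreal_leI)
      qed auto
    qed
    also have "\<dots> = ennreal K * ennreal (2 * sqrt c)"
      by (subst nn_integral_cmult) (auto simp: int_inv_sqrt[OF c])
    also have "\<dots> < \<infinity>" by (simp add: ennreal_mult_less_top)
    finally show ?thesis .
  qed
  have "P_chi2 c 1 r = (\<integral>x. indicator {0<..<c} x * gg x r \<partial>lborel)"
    unfolding P_chi2_def interval_lebesgue_integral_def set_lebesgue_integral_def
    using c by (auto intro!: Bochner_Integration.integral_cong simp: zero_ereal_def indicator_def chi2_density_1 r)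
  also have "\<dots> = enn2real (\<integral>\<^sup>+ u. indicator {0<..<c} u * ennreal (gg u r) \<partial>lborel)"
    by (rule enn2real_nn_integral_eq_integral[symmetric])
       (auto simp: indicator_def gg_nonneg less_imp_le)
  finally show ?thesis using fin by simp
qed



lemma exp_mart:
  assumes Z_distr: "distributed M lborel Z (normal_density 0 (sqrt h))" and h: "h > 0"
  shows "(\<integral>\<^sup>+ x. ennreal (exp (\<nu> * Z x - \<nu>\<^sup>2 * h / 2)) \<partial>M) = 1"
proof -
  have "(\<integral>\<^sup>+ x. ennreal (exp (\<nu> * Z x - \<nu>\<^sup>2 * h / 2)) \<partial>M)
      = (\<integral>\<^sup>+ z. ennreal (normal_density 0 (sqrt h) z) * ennreal (exp (\<nu> * z - \<nu>\<^sup>2 * h / 2)) \<partial>lborel)"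
    by (rule distributed_nn_integral[OF Z_distr, symmetric]) simp
  also have "\<dots> = (\<integral>\<^sup>+ z. ennreal (normal_density (\<nu> * h) (sqrt h) z) \<partial>lborel)"
  proof (intro nn_integral_cong)
    fix z :: real
    have "-(z - 0)\<^sup>2 / (2 * (sqrt h)\<^sup>2) + (\<nu> * z - \<nu>\<^sup>2 * h / 2) = -(z - \<nu> * h)\<^sup>2 / (2 * (sqrt h)\<^sup>2)"
      using h by (simp add: power2_eq_square field_simps)
    then have "normal_density 0 (sqrt h) z * exp (\<nu> * z - \<nu>\<^sup>2 * h / 2) = normal_density (\<nu> * h) (sqrt h) z"
      unfolding normal_density_def by (simp add: exp_add[symmetric])
    then show "ennreal (normal_density 0 (sqrt h) z) * ennreal (exp (\<nu> * z - \<nu>\<^sup>2 * h / 2))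
       = ennreal (normal_density (\<nu> * h) (sqrt h) z)"
      by (simp add: ennreal_mult[symmetric])
  qed
  also have "\<dots> = 1" using h by (intro nn_normal_1) simp
  finally show ?thesis .
qed



theorem mainTheorem6:
  fixes M :: "'a measure"
    and Ft \<sigma>t h \<nu> \<rho> :: real
    and Z I F :: "'a \<Rightarrow> real"
  assumes "prob_space M"
    and "Ft > 0" and "\<sigma>t > 0" and "h > 0" and "\<nu> > 0" and "-1 < \<rho>" and "\<rho> < 1"
    and Z_distr: "distributed M lborel Z (normal_density 0 (sqrt h))"
    and I_meas: "I \<in> borel_measurable M" and I_pos: "\<forall>x\<in>space M. I x > 0"
    and F_meas: "F \<in> borel_measurable M" and F_nonneg: "\<forall>x\<in>space M. F x \<ge> 0"
    and cond_law:
      "\<forall>y>0. AE x in M.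
         nn_cond_exp M
           (vimage_algebra (space M)
              (\<lambda>w. (\<sigma>t * exp (\<nu> * Z w - \<nu>\<^sup>2 * h / 2), I w)) borel)
           (indicator {w \<in> space M. F w \<ge> y}) x
         = ennreal (P_chi2
             ((Ft + \<rho> / \<nu> * (\<sigma>t * exp (\<nu> * Z x - \<nu>\<^sup>2 * h / 2) - \<sigma>t))\<^sup>2
                / ((sqrt (1 - \<rho>\<^sup>2))\<^sup>2 * \<sigma>t\<^sup>2 * h * I x))
             1
             (y\<^sup>2 / ((sqrt (1 - \<rho>\<^sup>2))\<^sup>2 * \<sigma>t\<^sup>2 * h * I x)))"
  shows "(AE x in M.
            nn_cond_exp M
              (vimage_algebra (space M)
                 (\<lambda>w. (\<sigma>t * exp (\<nu> * Z w - \<nu>\<^sup>2 * h / 2), I w)) borel)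
              (\<lambda>w. ennreal (F w)) x
            = ennreal \<bar>Ft + \<rho> / \<nu> * (\<sigma>t * exp (\<nu> * Z x - \<nu>\<^sup>2 * h / 2) - \<sigma>t)\<bar>)
         \<and> (\<integral>\<^sup>+ x. ennreal (F x) \<partial>M) \<ge> ennreal Ft"
proof -
  interpret prob_space M by fact
  note [measurable] = I_meas F_meas
  have Zm[measurable]: "Z \<in> borel_measurable M"
    using distributed_measurable[OF Z_distr] by simp
  define T where "T = (\<lambda>w. (\<sigma>t * exp (\<nu> * Z w - \<nu>\<^sup>2 * h / 2), I w))"
  define G where "G = vimage_algebra (space M) T borel"
  define a where "a = (\<lambda>x. Ft + \<rho> / \<nu> * (\<sigma>t * exp (\<nu> * Z x - \<nu>\<^sup>2 * h / 2) - \<sigma>t))"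
  define Vf where "Vf = (\<lambda>x. (sqrt (1 - \<rho>\<^sup>2))\<^sup>2 * \<sigma>t\<^sup>2 * h * I x)"
  define cf where "cf = (\<lambda>x. (a x)\<^sup>2 / Vf x)"
  have Tm[measurable]: "T \<in> borel_measurable M" unfolding T_def by measurable
  have subalg: "subalgebra M G"
    unfolding subalgebra_def G_def
    using sets_image_in_sets[OF refl Tm] by auto
  interpret finite_measure_subalgebra M G
    by unfold_locales (rule subalg)
  have rho2: "1 - \<rho>\<^sup>2 > 0"
    using \<open>-1 < \<rho>\<close> \<open>\<rho> < 1\<close> by (simp add: abs_square_less_1)
  have Vpos: "Vf x > 0" if "x \<in> space M" for x
    unfolding Vf_def using rho2 I_pos that \<open>\<sigma>t > 0\<close> \<open>h > 0\<close> by simp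
  have cf0: "cf x \<ge> 0" if "x \<in> space M" for x
    unfolding cf_def using Vpos[OF that] by simp
  have sqcf: "sqrt (cf x * Vf x) = \<bar>a x\<bar>" if "x \<in> space M" for x
    unfolding cf_def using Vpos[OF that] by simp
  have am[measurable]: "a \<in> borel_measurable M" unfolding a_def by measurable
  have Vm[measurable]: "Vf \<in> borel_measurable M" unfolding Vf_def by measurable
  have cm[measurable]: "cf \<in> borel_measurable M" unfolding cf_def by measurable
  have aG: "(\<lambda>x. ennreal \<bar>a x\<bar>) \<in> borel_measurable G"
  proof -
    have "(\<lambda>x. (\<lambda>p. ennreal \<bar>Ft + \<rho> / \<nu> * (fst p - \<sigma>t)\<bar>) (T x)) \<in> borel_measurable G"
      unfolding G_def
      apply (rule measurable_compose[OF measurable_vimage_algebra1])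
       apply simp
      apply (simp only: borel_prod[symmetric])
      apply measurable
      done
    then show ?thesis unfolding a_def T_def by simp
  qed
  have pf: "pair_sigma_finite M lborel"
    by (simp add: pair_sigma_finite_def lborel.sigma_finite_measure_axioms sigma_finite_measure_axioms)
  define Q where "Q = (\<lambda>x y. \<integral>\<^sup>+ u. indicator {0<..<cf x} u * ennreal (gg u (y\<^sup>2 / Vf x)) \<partial>lborel)"
  have Qm: "(\<lambda>(x, y). indicator {0<..} y * (indicator A x * Q x y)) \<in> borel_measurable (M \<Otimes>\<^sub>M lborel)"
    if [measurable]: "A \<in> sets M" for A
    unfolding Q_def indicator_def greaterThanLessThan_iff greaterThan_iff gg_def cosh_field_def by measurable
  have key: "(\<integral>\<^sup>+ x \<in> A. ennreal (F x) \<partial>M) = (\<integral>\<^sup>+ x \<in> A. ennreal \<bar>a x\<bar> \<partial>M)"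
    if AG: "A \<in> sets G" for A
  proof -
    have AM[measurable]: "A \<in> sets M" using AG subalg unfolding subalgebra_def by auto
    have "(\<integral>\<^sup>+ x \<in> A. ennreal (F x) \<partial>M)
        = (\<integral>\<^sup>+ x. (\<integral>\<^sup>+ y. indicator A x * (indicator {0<..} y * (if y \<le> F x then 1 else 0)) \<partial>lborel) \<partial>M)"
    proof (intro nn_integral_cong)
      fix x assume x: "x \<in> space M"
      have "(\<integral>\<^sup>+ y. indicator A x * (indicator {0<..} y * (if y \<le> F x then 1 else 0)) \<partial>lborel)
          = indicator A x * (\<integral>\<^sup>+ y. indicator {0<..F x} y \<partial>lborel)"
        by (subst nn_integral_cmult[symmetric]) (auto intro!: nn_integral_cong simp: indicator_def)
      also have "\<dots> = indicator A x * ennreal (F x)"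
        using F_nonneg x by simp
      finally show "ennreal (F x) * indicator A x = (\<integral>\<^sup>+ y. indicator A x * (indicator {0<..} y * (if y \<le> F x then 1 else 0)) \<partial>lborel)"
        by (simp add: mult.commute)
    qed
    also have "\<dots> = (\<integral>\<^sup>+ y. (\<integral>\<^sup>+ x. indicator A x * (indicator {0<..} y * (if y \<le> F x then 1 else 0)) \<partial>M) \<partial>lborel)"
      by (rule pair_sigma_finite.Fubini'[OF pf, symmetric]) measurable
    also have "\<dots> = (\<integral>\<^sup>+ y. (\<integral>\<^sup>+ x. indicator {0<..} y * (indicator A x * Q x y) \<partial>M) \<partial>lborel)"
    proof (rule nn_integral_cong)
      fix y :: real
      show "(\<integral>\<^sup>+ x. indicator A x * (indicator {0<..} y * (if y \<le> F x then 1 else 0)) \<partial>M)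
          = (\<integral>\<^sup>+ x. indicator {0<..} y * (indicator A x * Q x y) \<partial>M)"
      proof (cases "y > 0")
        case False then show ?thesis by simp
      next
        case y: True
        have "(\<integral>\<^sup>+ x. indicator A x * (indicator {0<..} y * (if y \<le> F x then 1 else 0)) \<partial>M)
            = (\<integral>\<^sup>+ x. indicator A x * indicator {w \<in> space M. F w \<ge> y} x \<partial>M)"
          using y by (intro nn_integral_cong) (auto simp: indicator_def)
        also have "\<dots> = (\<integral>\<^sup>+ x. indicator A x * nn_cond_exp M G (indicator {w \<in> space M. F w \<ge> y}) x \<partial>M)"
          by (rule nn_cond_exp_intg[symmetric]) (use AG in auto)
        also have "\<dots> = (\<integral>\<^sup>+ x. indicator A x * ennreal (P_chi2 (cf x) 1 (y\<^sup>2 / Vf x)) \<partial>M)"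
        proof -
          have cl: "AE x in M. nn_cond_exp M G (indicator {w \<in> space M. F w \<ge> y}) x
              = ennreal (P_chi2 (cf x) 1 (y\<^sup>2 / Vf x))"
            using cond_law y unfolding G_def T_def cf_def a_def Vf_def by auto
          show ?thesis by (rule nn_integral_cong_AE) (use cl in eventually_elim, simp)
        qed
        also have "\<dots> = (\<integral>\<^sup>+ x. indicator {0<..} y * (indicator A x * Q x y) \<partial>M)"
          using y
          by (intro nn_integral_cong) (simp add: Q_def P_chi2_nn cf0 Vpos)
        finally show ?thesis .
      qed
    qed
    also have "\<dots> = (\<integral>\<^sup>+ x. (\<integral>\<^sup>+ y. indicator {0<..} y * (indicator A x * Q x y) \<partial>lborel) \<partial>M)"
      by (rule pair_sigma_finite.Fubini'[OF pf]) (use Qm[OF AM] in simp)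
    also have "\<dots> = (\<integral>\<^sup>+ x \<in> A. ennreal \<bar>a x\<bar> \<partial>M)"
    proof (intro nn_integral_cong)
      fix x assume x: "x \<in> space M"
      have "(\<integral>\<^sup>+ y. indicator {0<..} y * (indicator A x * Q x y) \<partial>lborel)
          = indicator A x * (\<integral>\<^sup>+ y. indicator {0<..} y * Q x y \<partial>lborel)"
        by (subst nn_integral_cmult[symmetric]) (auto simp: Q_def algebra_simps)
      also have "\<dots> = indicator A x * ennreal \<bar>a x\<bar>"
        unfolding Q_def using stepA[OF cf0[OF x] Vpos[OF x]] sqcf[OF x] by simp
      finally show "(\<integral>\<^sup>+ y. indicator {0<..} y * (indicator A x * Q x y) \<partial>lborel) = ennreal \<bar>a x\<bar> * indicator A x"
        by (simp add: mult.commute)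
    qed
    finally show ?thesis .
  qed
  have part1: "AE x in M. nn_cond_exp M G (\<lambda>w. ennreal (F w)) x = ennreal \<bar>a x\<bar>"
    using nn_cond_exp_charact[OF key _ aG] by auto
  have EX: "(\<integral>\<^sup>+ x. ennreal (F x) \<partial>M) = (\<integral>\<^sup>+ x. ennreal \<bar>a x\<bar> \<partial>M)"
    using key[of "space M"] by (simp add: G_def sets_vimage_algebra_space)
  define X where "X = (\<lambda>x. exp (\<nu> * Z x - \<nu>\<^sup>2 * h / 2))"
  have Xm[measurable]: "X \<in> borel_measurable M" unfolding X_def by measurable
  have EX1: "(\<integral>\<^sup>+ x. ennreal (X x) \<partial>M) = 1"
    unfolding X_def by (rule exp_mart[OF Z_distr \<open>h > 0\<close>])
  define b where "b = \<rho> * \<sigma>t / \<nu>"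
  have aX: "a x = Ft - b + b * X x" for x
    unfolding a_def b_def X_def using \<open>\<nu> > 0\<close> by (simp add: field_simps)
  have part2: "(\<integral>\<^sup>+ x. ennreal \<bar>a x\<bar> \<partial>M) \<ge> ennreal Ft"
  proof (cases "b \<ge> 0")
    case True
    have "ennreal b + ennreal Ft = (\<integral>\<^sup>+ x. ennreal Ft + ennreal b * ennreal (X x) \<partial>M)"
      by (simp add: nn_integral_add nn_integral_cmult EX1 emeasure_space_1 add.commute)
    also have "\<dots> \<le> (\<integral>\<^sup>+ x. ennreal b + ennreal \<bar>a x\<bar> \<partial>M)"
    proof (intro nn_integral_mono)
      fix x
      have "Ft + b * X x \<le> b + \<bar>a x\<bar>" using aX[of x] by linarith
      then show "ennreal Ft + ennreal b * ennreal (X x) \<le> ennreal b + ennreal \<bar>a x\<bar>"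
        using True \<open>Ft > 0\<close> by (simp add: X_def ennreal_mult[symmetric] ennreal_plus[symmetric] del: ennreal_plus)
    qed
    also have "\<dots> = ennreal b + (\<integral>\<^sup>+ x. ennreal \<bar>a x\<bar> \<partial>M)"
      by (simp add: nn_integral_add emeasure_space_1)
    finally show ?thesis by (simp add: ennreal_add_left_cancel_le)
  next
    case False
    have "ennreal (-b) + ennreal Ft = (\<integral>\<^sup>+ x. ennreal (Ft - b) \<partial>M)"
      using False \<open>Ft > 0\<close> by (simp add: emeasure_space_1 ennreal_plus[symmetric] del: ennreal_plus)
    also have "\<dots> \<le> (\<integral>\<^sup>+ x. ennreal (-b) * ennreal (X x) + ennreal \<bar>a x\<bar> \<partial>M)"
    proof (intro nn_integral_mono)
      fix x
      have "Ft - b \<le> (-b) * X x + \<bar>a x\<bar>" using aX[of x] by linarith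
      moreover have "ennreal (-b) * ennreal (X x) + ennreal \<bar>a x\<bar> = ennreal ((-b) * X x + \<bar>a x\<bar>)"
      proof -
        have X0: "X x > 0" unfolding X_def by simp
        then have p: "(-b) * X x \<ge> 0" using False by (simp add: mult_nonpos_nonneg)
        have "ennreal (-b) * ennreal (X x) = ennreal ((-b) * X x)"
          using False X0 by (subst ennreal_mult[symmetric]) auto
        then show ?thesis using p by (simp add: ennreal_plus[symmetric] del: ennreal_plus)
      qed
      ultimately show "ennreal (Ft - b) \<le> ennreal (-b) * ennreal (X x) + ennreal \<bar>a x\<bar>"
        by (simp add: ennreal_leI)
    qed
    also have "\<dots> = ennreal (-b) + (\<integral>\<^sup>+ x. ennreal \<bar>a x\<bar> \<partial>M)"
      by (simp add: nn_integral_add nn_integral_cmult EX1)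
    finally show ?thesis by (simp add: ennreal_add_left_cancel_le)
  qed
  show ?thesis
    using part1 part2 EX unfolding G_def T_def a_def by simp
qed

end
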